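(* Let $k\ge 1$ and $n$ be integers with $kn$ even, and let $H^*\in\mathcal H$ be any $k$-factor on $[n]$. Then for every integer $0\le t\le kn/2$, $$\left|\{H\in\mathcal H:\ |H\triangle H^*|=2t\}\right|\;\le\;\binom{kn/2}{t}\frac{(2t)!}{2^t\,t!}\;\le\;\binom{kn/2}{t}2^t\,t!\;\le\;(kn)^t\,e^{-t(t-1)/(kn)}.$$
   Context: A $k$-factor on $[n]$ is a $k$-regular simple graph with vertex set $[n]$, identified with its edge set; $\mathcal H$ denotes the set of all $k$-factors on $[n]$. $\triangle$ denotes symmetric difference of edge sets. *)

theory Defs
  imports Complex_Main
begin

definition all_edges :: "nat \<Rightarrow> nat set set" where
  "all_edges n = {e. e \<subseteq> {1..n} \<and> card e = 2}"

definition is_k_factor :: "nat \<Rightarrow> nat \<Rightarrow> nat set set \<Rightarrow> bool" where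
  "is_k_factor k n H \<longleftrightarrow> H \<subseteq> all_edges n \<and> (\<forall>v\<in>{1..n}. card {e\<in>H. v \<in> e} = k)"

definition k_factors :: "nat \<Rightarrow> nat \<Rightarrow> nat set set set" where
  "k_factors k n = {H. is_k_factor k n H}"

definition symdiff :: "'a set \<Rightarrow> 'a set \<Rightarrow> 'a set" where
  "symdiff A B = (A - B) \<union> (B - A)"

end

theory Submission
  imports Defs
begin

definition deg :: "nat set set \<Rightarrow> nat \<Rightarrow> nat" where
  "deg G v = card {e\<in>G. v \<in> e}"

fun df :: "nat \<Rightarrow> nat" where
  "df 0 = 1" | "df (Suc t) = (2*t+1) * df t"

lemma finite_all_edges: "finite (all_edges n)"
  unfolding all_edges_def by (rule finite_subset[of _ "Pow {1..n}"]) auto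

lemma handshake:
  assumes "G \<subseteq> all_edges n"
  shows "(\<Sum>v\<in>{1..n}. deg G v) = 2 * card G"
proof -
  have fG: "finite G" using assms finite_all_edges finite_subset by blast
  have "(\<Sum>v\<in>{1..n}. deg G v) = (\<Sum>v\<in>{1..n}. \<Sum>e\<in>G. if v \<in> e then 1 else 0)"
    unfolding deg_def using fG by (auto simp: sum.If_cases intro!: sum.cong arg_cong[where f=card])
  also have "\<dots> = (\<Sum>e\<in>G. \<Sum>v\<in>{1..n}. if v \<in> e then 1 else 0)" by (rule sum.swap)
  also have "\<dots> = (\<Sum>e\<in>G. 2)"
  proof (rule sum.cong[OF refl])
    fix e assume "e \<in> G"
    then have "e \<subseteq> {1..n}" "card e = 2" using assms unfolding all_edges_def by auto
    then have "{1..n} \<inter> e = e" by auto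
    then show "(\<Sum>v\<in>{1..n}. if v \<in> e then 1 else 0) = (2::nat)"
      using \<open>card e = 2\<close> by (simp add: sum.If_cases)
  qed
  finally show ?thesis by simp
qed

lemma deg_remove:
  assumes "finite G" "e \<in> G"
  shows "deg (G - {e}) u = deg G u - (if u \<in> e then 1 else 0)"
proof -
  have "{x\<in>G - {e}. u \<in> x} = {x\<in>G. u \<in> x} - {e}" by auto
  then show ?thesis unfolding deg_def using assms by (auto simp: card_Diff_singleton_if)
qed

lemma df_fact: "real (df t) = fact (2 * t) / (2 ^ t * fact t)"
proof (induction t)
  case 0 then show ?case by simp
next
  case (Suc t)
  have f: "fact (2 * Suc t) = (2*real t+2)*(2*real t+1)* (fact (2*t) :: real)"
    by (simp add: fact_Suc algebra_simps)
  have "real (df (Suc t)) = (2*real t+1) * (fact (2*t) / (2^t*fact t))" using Suc by (simp add: add_divide_distrib algebra_simps)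
  also have "\<dots> = fact (2 * Suc t) / (2 ^ Suc t * fact (Suc t))"
  proof -
    have g: "fact (Suc t) = (real t+1)*(fact t::real)" "(2::real)^Suc t = 2*2^t" by (simp_all add: fact_Suc)
    have nz: "(fact t::real) \<noteq> 0" "(2::real)^t \<noteq> 0" "real t + 1 \<noteq> 0" by auto
    have e: "(2*real t+2)*(2*real t+1)*fact (2*t) / (2*2^t*((real t+1)*fact t))
       = ((2*real t+1)*fact (2*t)) / (2^t*fact t)"
      apply (subst frac_eq_eq)
      using nz apply (simp, simp add: add_nonneg_eq_0_iff)
      using nz by (auto simp: algebra_simps)
    show ?thesis unfolding f g using e by (simp add: mult.assoc)
  qed
  finally show ?case .
qed

lemma df_le: "df t \<le> 2 ^ t * fact t"
proof (induction t)
  case 0 then show ?case by simp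
next
  case (Suc t)
  have "df (Suc t) \<le> (2*t+2) * (2 ^ t * fact t)"
    using mult_le_mono[OF _ Suc.IH, of "2*t+1" "2*t+2"] by simp
  also have "\<dots> = 2 ^ Suc t * fact (Suc t)" by (simp add: algebra_simps)
  finally show ?case .
qed

lemma count_deg:
  "\<forall>d. (\<Sum>v\<in>{1..n}. d v) = 2*t \<longrightarrow>
     card {G. G \<subseteq> all_edges n \<and> (\<forall>v\<in>{1..n}. deg G v = d v)} \<le> df t"
proof (induction t)
  case 0
  show ?case
  proof (intro allI impI)
    fix d :: "nat \<Rightarrow> nat" assume "(\<Sum>v\<in>{1..n}. d v) = 2*0"
    then have d0: "\<forall>v\<in>{1..n}. d v = 0" by simp
    have "{G. G \<subseteq> all_edges n \<and> (\<forall>v\<in>{1..n}. deg G v = d v)} \<subseteq> {{}}"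
    proof
      fix G assume G: "G \<in> {G. G \<subseteq> all_edges n \<and> (\<forall>v\<in>{1..n}. deg G v = d v)}"
      have fG: "finite G" using G finite_all_edges finite_subset by blast
      have "G = {}"
      proof (rule ccontr)
        assume "G \<noteq> {}"
        then obtain e where e: "e \<in> G" by auto
        then have "e \<subseteq> {1..n}" "card e = 2" using G unfolding all_edges_def by auto
        then obtain v where v: "v \<in> e" "v \<in> {1..n}"
          using card_2_iff[THEN iffD1, OF \<open>card e = 2\<close>] by blast
        have "{x\<in>G. v\<in>x} \<noteq> {}" using e v by auto
        then have "deg G v \<noteq> 0" unfolding deg_def using fG by simp
        then show False using G d0 v by auto
      qed
      then show "G \<in> {{}}" by simp
    qed
    then show "card {G. G \<subseteq> all_edges n \<and> (\<forall>v\<in>{1..n}. deg G v = d v)} \<le> df 0"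
    proof -
      have "card {G. G \<subseteq> all_edges n \<and> (\<forall>v\<in>{1..n}. deg G v = d v)} \<le> card {{}::nat set set}"
        by (rule card_mono) (simp, fact)
      then show ?thesis by simp
    qed
  qed
next
  case (Suc t)
  show ?case
  proof (intro allI impI)
    fix d :: "nat \<Rightarrow> nat" assume sd: "(\<Sum>v\<in>{1..n}. d v) = 2 * Suc t"
    define Gs where "Gs = (\<lambda>d. {G. G \<subseteq> all_edges n \<and> (\<forall>v\<in>{1..n}. deg G v = d v)})"
    have finGs: "finite (Gs d')" for d'
      unfolding Gs_def by (rule finite_subset[of _ "Pow (all_edges n)"]) (auto simp: finite_all_edges)
    have "\<exists>v\<in>{1..n}. d v > 0"
    proof (rule ccontr)
      assume "\<not> (\<exists>v\<in>{1..n}. d v > 0)"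
      then have "(\<Sum>v\<in>{1..n}. d v) = 0" by simp
      then show False using sd by simp
    qed
    then obtain v where v: "v \<in> {1..n}" "d v > 0" by blast
    define W where "W = {w\<in>{1..n}. w \<noteq> v \<and> d w > 0}"
    define P where "P = (\<lambda>w. {G\<in>Gs d. {v,w} \<in> G})"
    have cover: "Gs d \<subseteq> (\<Union>w\<in>W. P w)"
    proof
      fix G assume G: "G \<in> Gs d"
      have Gsub: "G \<subseteq> all_edges n" and Gdeg: "\<forall>u\<in>{1..n}. deg G u = d u"
        using G unfolding Gs_def by simp_all
      have fG: "finite G" using Gsub finite_all_edges by (rule finite_subset)
      have "deg G v > 0" using Gdeg v by simp
      then have "{e\<in>G. v\<in>e} \<noteq> {}" unfolding deg_def by (intro notI) simp
      then obtain e where e: "e \<in> G" "v \<in> e" by auto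
      then have es: "e \<subseteq> {1..n}" "card e = 2" using Gsub unfolding all_edges_def by auto
      obtain x y where xy: "e = {x,y}" "x \<noteq> y" using card_2_iff[THEN iffD1, OF es(2)] by blast
      obtain w where w: "e = {v,w}" "w \<noteq> v"
      proof (cases "v = x")
        case True then show ?thesis using that[of y] xy by simp
      next
        case False then have "v = y" using e(2) xy by blast
        then show ?thesis using that[of x] xy by (simp add: insert_commute)
      qed
      have wn: "w \<in> {1..n}" using es w by auto
      have "{x\<in>G. w\<in>x} \<noteq> {}" using e w by auto
      then have "deg G w \<noteq> 0" unfolding deg_def using fG by simp
      then have "d w > 0" using Gdeg wn by simp
      then have "w \<in> W" unfolding W_def using wn w by auto
      then show "G \<in> (\<Union>w\<in>W. P w)" unfolding P_def using G e(1) w(1) by blast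
    qed
    have Pw: "card (P w) \<le> df t" if wW: "w \<in> W" for w
    proof -
      have wv: "w \<noteq> v" "w \<in> {1..n}" "d w > 0" using wW unfolding W_def by auto
      define d' where "d' = (\<lambda>u. if u = v \<or> u = w then d u - 1 else d u)"
      have "(\<Sum>u\<in>{1..n}. d u) = (\<Sum>u\<in>{1..n}. d' u + (if u \<in> {v,w} then 1 else 0))"
        by (rule sum.cong) (use v wv in \<open>auto simp: d'_def\<close>)
      also have "\<dots> = (\<Sum>u\<in>{1..n}. d' u) + card ({1..n} \<inter> {v,w})"
        by (simp add: sum.distrib sum.If_cases, rule arg_cong[where f=card], auto)
      also have "{1..n} \<inter> {v,w} = {v,w}" using v wv by auto
      finally have "(\<Sum>u\<in>{1..n}. d' u) = 2 * t" using sd wv by simp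
      then have IH: "card (Gs d') \<le> df t" using Suc.IH unfolding Gs_def by simp
      have "inj_on (\<lambda>G. G - {{v,w}}) (P w)"
      proof (rule inj_onI)
        fix G1 G2 assume a: "G1 \<in> P w" "G2 \<in> P w" and eq: "G1 - {{v,w}} = G2 - {{v,w}}"
        have i1: "{v,w} \<in> G1" "{v,w} \<in> G2" using a unfolding P_def by auto
        have "G1 = insert {v,w} (G1 - {{v,w}})" by (rule insert_Diff[symmetric]) (fact i1)
        also have "\<dots> = insert {v,w} (G2 - {{v,w}})" by (simp only: eq)
        also have "\<dots> = G2" by (rule insert_Diff) (fact i1)
        finally show "G1 = G2" .
      qed
      moreover have "(\<lambda>G. G - {{v,w}}) ` P w \<subseteq> Gs d'"
      proof
        fix G' assume "G' \<in> (\<lambda>G. G - {{v,w}}) ` P w"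
        then obtain G where G: "G \<in> Gs d" "{v,w} \<in> G" and G': "G' = G - {{v,w}}"
          unfolding P_def by auto
        have Gsub: "G \<subseteq> all_edges n" and Gdeg: "\<forall>u\<in>{1..n}. deg G u = d u"
          using G(1) unfolding Gs_def by simp_all
        have fG: "finite G" using Gsub finite_all_edges by (rule finite_subset)
        have "\<forall>u\<in>{1..n}. deg G' u = d' u"
          unfolding G' deg_remove[OF fG G(2)] d'_def using Gdeg by auto
        moreover have "G' \<subseteq> all_edges n" using Gsub G' by auto
        ultimately show "G' \<in> Gs d'" unfolding Gs_def by simp
      qed
      ultimately have "card (P w) \<le> card (Gs d')"
        by (rule card_inj_on_le[OF _ _ finGs])
      then show ?thesis using IH by simp
    qed
    have cardW: "card W \<le> 2 * t + 1"
    proof -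
      have fW: "finite W" unfolding W_def by simp
      have "card W = (\<Sum>w\<in>W. 1)" by simp
      also have "\<dots> \<le> (\<Sum>w\<in>W. d w)" by (rule sum_mono) (auto simp: W_def)
      also have "\<dots> \<le> (\<Sum>w\<in>{1..n} - {v}. d w)" by (rule sum_mono2) (auto simp: W_def)
      also have "\<dots> = (\<Sum>w\<in>{1..n}. d w) - d v" using v by (simp add: sum_diff1_nat)
      finally show ?thesis using sd v by simp
    qed
    have fU: "finite (\<Union>w\<in>W. P w)"
      by (rule finite_subset[OF _ finGs[of d]]) (auto simp: P_def)
    have "card (Gs d) \<le> card (\<Union>w\<in>W. P w)"
      by (rule card_mono[OF fU cover])
    also have "\<dots> \<le> (\<Sum>w\<in>W. card (P w))" by (rule card_UN_le) (simp add: W_def)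
    also have "\<dots> \<le> (\<Sum>w\<in>W. df t)" by (rule sum_mono) (use Pw in auto)
    also have "\<dots> = card W * df t" by simp
    also have "\<dots> \<le> (2*t+1) * df t" using mult_le_mono1[OF cardW] by simp
    finally show "card {G. G \<subseteq> all_edges n \<and> (\<forall>v\<in>{1..n}. deg G v = d v)} \<le> df (Suc t)"
      unfolding Gs_def by simp
  qed
qed

lemma sum_real_lt: "(\<Sum>i<t. real i) = real t * (real t - 1) / 2"
  by (induction t) (auto simp: field_simps)

lemma ineq3:
  fixes N m t :: nat
  assumes "N = 2 * m" "t \<le> m"
  shows "real (m choose t) * 2 ^ t * fact t \<le> real N ^ t * exp (- (real t * (real t - 1)) / real N)"
proof (cases "N = 0")
  case True then show ?thesis using assms by simp
next
  case False
  then have Np: "real N > 0" by simp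
  have "real (m choose t) * fact t = (\<Prod>i = 0..<t. real m - of_nat i)"
    by (simp add: binomial_gbinomial gbinomial_mult_fact')
  moreover have "(\<Prod>i<t. 2 * (real m - real i)) = 2 ^ t * (\<Prod>i<t. real m - real i)"
    by (simp only: prod.distrib prod_constant card_lessThan)
  ultimately have "real (m choose t) * 2 ^ t * fact t = (\<Prod>i<t. 2 * (real m - real i))"
    by (simp add: atLeast0LessThan mult.commute mult.left_commute)
  also have "\<dots> = (\<Prod>i<t. real N - 2 * real i)"
    using assms by (simp add: algebra_simps)
  also have "\<dots> \<le> (\<Prod>i<t. real N * exp (- 2 * real i / real N))"
  proof (rule prod_mono)
    fix i assume "i \<in> {..<t}"
    then have ii: "2 * real i \<le> real N" using assms by simp
    have "1 + (- 2 * real i / real N) \<le> exp (- 2 * real i / real N)" by (rule exp_ge_add_one_self)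
    then have "real N * (1 + (- 2 * real i / real N)) \<le> real N * exp (- 2 * real i / real N)"
      using Np by simp
    moreover have "real N * (1 + (- 2 * real i / real N)) = real N - 2 * real i"
      using Np by (simp add: field_simps)
    ultimately show "0 \<le> real N - 2 * real i \<and> real N - 2 * real i \<le> real N * exp (- 2 * real i / real N)"
      using ii by simp
  qed
  also have "\<dots> = real N ^ t * exp (\<Sum>i<t. - 2 * real i / real N)"
    by (simp add: prod.distrib exp_sum)
  also have "(\<Sum>i<t. - 2 * real i / real N) = - 2 * (\<Sum>i<t. real i) / real N"
    by (simp add: sum_divide_distrib sum_distrib_left)
  also have "\<dots> = - (real t * (real t - 1)) / real N"
    unfolding sum_real_lt by simp
  finally show ?thesis .
qed

lemma deg_split:
  assumes "finite H"
  shows "deg H v = deg (H \<inter> K) v + deg (H - K) v"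
proof -
  have "{e\<in>H. v\<in>e} = {e\<in>H \<inter> K. v\<in>e} \<union> {e\<in>H - K. v\<in>e}" by auto
  moreover have "{e\<in>H \<inter> K. v\<in>e} \<inter> {e\<in>H - K. v\<in>e} = {}" by auto
  ultimately show ?thesis unfolding deg_def using assms
    by (simp add: card_Un_disjoint)
qed

lemma count_main:
  fixes k n t :: nat and Hs :: "nat set set"
  assumes Hs: "Hs \<in> k_factors k n"
  shows "card {H \<in> k_factors k n. card (symdiff H Hs) = 2 * t} \<le> (card Hs choose t) * df t"
proof -
  have HsE: "Hs \<subseteq> all_edges n" and Hsd: "\<forall>v\<in>{1..n}. deg Hs v = k"
    using Hs unfolding k_factors_def is_k_factor_def deg_def by auto
  have fHs: "finite Hs" using HsE finite_all_edges by (rule finite_subset)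
  define X where "X = {H \<in> k_factors k n. card (symdiff H Hs) = 2 * t}"
  define Ss where "Ss = {S. S \<subseteq> Hs \<and> card S = t}"
  define B where "B = (\<lambda>S. {A. A \<subseteq> all_edges n \<and> (\<forall>v\<in>{1..n}. deg A v = deg S v)})"
  define T where "T = Sigma Ss B"
  have fSs: "finite Ss" unfolding Ss_def using fHs by simp
  have fB: "finite (B S)" for S
    unfolding B_def by (rule finite_subset[of _ "Pow (all_edges n)"]) (auto simp: finite_all_edges)
  have fT: "finite T" unfolding T_def using fSs fB by simp
  have inj: "inj_on (\<lambda>H. (Hs - H, H - Hs)) X"
  proof (rule inj_onI)
    fix H1 H2 assume "(Hs - H1, H1 - Hs) = (Hs - H2, H2 - Hs)"
    then have a: "Hs - H1 = Hs - H2" "H1 - Hs = H2 - Hs" by auto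
    have "H1 = (Hs - (Hs - H1)) \<union> (H1 - Hs)" by auto
    also have "\<dots> = (Hs - (Hs - H2)) \<union> (H2 - Hs)" by (simp only: a)
    also have "\<dots> = H2" by auto
    finally show "H1 = H2" .
  qed
  have img: "(\<lambda>H. (Hs - H, H - Hs)) ` X \<subseteq> T"
  proof
    fix p assume "p \<in> (\<lambda>H. (Hs - H, H - Hs)) ` X"
    then obtain H where H: "H \<in> X" and p: "p = (Hs - H, H - Hs)" by auto
    have HE: "H \<subseteq> all_edges n" and Hd: "\<forall>v\<in>{1..n}. deg H v = k"
      and cs: "card (symdiff H Hs) = 2 * t"
      using H unfolding X_def k_factors_def is_k_factor_def deg_def by auto
    have fH: "finite H" using HE finite_all_edges by (rule finite_subset)
    have dd: "\<forall>v\<in>{1..n}. deg (H - Hs) v = deg (Hs - H) v"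
    proof
      fix v assume v: "v \<in> {1..n}"
      have "deg H v = deg (H \<inter> Hs) v + deg (H - Hs) v" by (rule deg_split[OF fH])
      moreover have "deg Hs v = deg (Hs \<inter> H) v + deg (Hs - H) v" by (rule deg_split[OF fHs])
      moreover have "Hs \<inter> H = H \<inter> Hs" by auto
      ultimately show "deg (H - Hs) v = deg (Hs - H) v" using Hd Hsd v by simp
    qed
    have E1: "H - Hs \<subseteq> all_edges n" using HE by auto
    have E2: "Hs - H \<subseteq> all_edges n" using HsE by auto
    have "2 * card (H - Hs) = 2 * card (Hs - H)"
      using handshake[OF E1] handshake[OF E2] dd by (metis (no_types, lifting) sum.cong)
    then have ceq: "card (H - Hs) = card (Hs - H)" by simp
    have "card (symdiff H Hs) = card (H - Hs) + card (Hs - H)"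
      unfolding symdiff_def by (rule card_Un_disjoint) (use fH fHs in auto)
    then have "card (Hs - H) = t" using cs ceq by simp
    then have "Hs - H \<in> Ss" unfolding Ss_def by auto
    moreover have "H - Hs \<in> B (Hs - H)" unfolding B_def using E1 dd by auto
    ultimately show "p \<in> T" unfolding T_def p by simp
  qed
  have "card X \<le> card T" by (rule card_inj_on_le[OF inj img fT])
  also have "card T = (\<Sum>S\<in>Ss. card (B S))" unfolding T_def using fSs fB by simp
  also have "\<dots> \<le> (\<Sum>S\<in>Ss. df t)"
  proof (rule sum_mono)
    fix S assume "S \<in> Ss"
    then have SE: "S \<subseteq> all_edges n" and cS: "card S = t" using HsE unfolding Ss_def by auto
    have "(\<Sum>v\<in>{1..n}. deg S v) = 2 * t" using handshake[OF SE] cS by simp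
    then show "card (B S) \<le> df t" using count_deg[of n t] unfolding B_def by blast
  qed
  also have "\<dots> = card Ss * df t" by simp
  also have "card Ss = card Hs choose t" unfolding Ss_def by (rule n_subsets[OF fHs])
  finally show ?thesis unfolding X_def .
qed

lemma card_kfactor:
  assumes Hs: "Hs \<in> k_factors k n"
  shows "card Hs = k * n div 2"
proof -
  have HsE: "Hs \<subseteq> all_edges n" and Hsd: "\<forall>v\<in>{1..n}. deg Hs v = k"
    using Hs unfolding k_factors_def is_k_factor_def deg_def by auto
  have "2 * card Hs = (\<Sum>v\<in>{1..n}. deg Hs v)" using handshake[OF HsE] by simp
  also have "\<dots> = (\<Sum>v\<in>{1..n}. k)" using Hsd by simp
  also have "\<dots> = k * n" by simp
  finally show ?thesis by simp
qed

theorem mainTheorem1: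
  fixes k n t :: nat and Hs :: "nat set set"
  assumes "k \<ge> 1" and "even (k * n)"
    and "Hs \<in> k_factors k n"
    and "t \<le> k * n div 2"
  shows "real (card {H \<in> k_factors k n. card (symdiff H Hs) = 2 * t})
           \<le> real ((k * n div 2) choose t) * (fact (2 * t) / (2 ^ t * fact t))
       \<and> real ((k * n div 2) choose t) * (fact (2 * t) / (2 ^ t * fact t))
           \<le> real ((k * n div 2) choose t) * 2 ^ t * fact t
       \<and> real ((k * n div 2) choose t) * 2 ^ t * fact t
           \<le> real (k * n) ^ t * exp (- (real t * (real t - 1)) / real (k * n))"
proof (intro conjI)
  have c: "card {H \<in> k_factors k n. card (symdiff H Hs) = 2 * t} \<le> ((k * n div 2) choose t) * df t"
    using count_main[OF assms(3), of t] card_kfactor[OF assms(3)] by simp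
  then have "real (card {H \<in> k_factors k n. card (symdiff H Hs) = 2 * t}) \<le> real (((k * n div 2) choose t) * df t)"
    by (rule of_nat_mono)
  then show "real (card {H \<in> k_factors k n. card (symdiff H Hs) = 2 * t})
           \<le> real ((k * n div 2) choose t) * (fact (2 * t) / (2 ^ t * fact t))"
    by (simp add: df_fact)
  have "real (df t) \<le> real (2 ^ t * fact t)" by (rule of_nat_mono[OF df_le])
  then have "fact (2 * t) / (2 ^ t * fact t) \<le> (2::real) ^ t * fact t"
    by (simp add: df_fact)
  then have "real ((k * n div 2) choose t) * (fact (2 * t) / (2 ^ t * fact t))
           \<le> real ((k * n div 2) choose t) * (2 ^ t * fact t)"
    by (rule mult_left_mono) simp
  then show "real ((k * n div 2) choose t) * (fact (2 * t) / (2 ^ t * fact t))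
           \<le> real ((k * n div 2) choose t) * 2 ^ t * fact t"
    by (simp only: mult.assoc)
  show "real ((k * n div 2) choose t) * 2 ^ t * fact t
           \<le> real (k * n) ^ t * exp (- (real t * (real t - 1)) / real (k * n))"
    by (rule ineq3) (use assms in auto)
qed

end
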